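(* Robust ex-post stability does not imply ex-ante stability: there exist a set $N$ of $n$ agents and a set $O$ of $n$ objects with strict preferences $\succ_i$ over $O$ ($i\in N$) and strict priorities $\succ_o$ over $N$ ($o\in O$), and a random matching $p$, such that $p$ is robust ex-post stable but not ex-ante stable.
   Context: A random matching is an $n\times n$ bistochastic matrix $p=[p(i,o)]_{i\in N,o\in O}$ (nonnegative entries, every row and every column summing to $1$); it is deterministic if all entries lie in $\{0,1\}$. A decomposition of $p$ is a representation $p=\sum_{j=1}^k\lambda_jP_j$ with $P_j$ deterministic matchings, $\lambda_j\in(0,1]$, $\sum_j\lambda_j=1$. A deterministic matching $p$ is stable if there exist no $i,j\in N$, $o,o'\in O$ with $p(i,o')=1$, $p(j,o)=1$, $o\succ_i o'$, $i\succ_o j$. A random matching $p$ is ex-ante stable if there exist no $i,j\in N$, $o,o'\in O$ with $p(i,o')>0$, $p(j,o)>0$, $o\succ_i o'$, $i\succ_o j$; it is robust ex-post stable if every decomposition of $p$ consists only of stable deterministic matchings. *)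

theory Defs
  imports Complex_Main
begin

text \<open>Agents N and objects Ob are finite sets of naturals (any finite sets can be so encoded).
  A strict preference/priority on a set A is a strict linear order on A, given as a relation
  (x, y) \<in> r meaning x is strictly preferred to y.  Matchings are functions
  N \<times> O \<rightarrow> real, read only on N \<times> Ob.\<close>

definition strict_pref_on :: "'a set \<Rightarrow> 'a rel \<Rightarrow> bool" where
  "strict_pref_on A r \<longleftrightarrow> r \<subseteq> A \<times> A \<and> strict_linear_order_on A r"

definition random_matching :: "nat set \<Rightarrow> nat set \<Rightarrow> (nat \<Rightarrow> nat \<Rightarrow> real) \<Rightarrow> bool" where
  "random_matching N Ob p \<longleftrightarrow>
     (\<forall>i\<in>N. \<forall>ob\<in>Ob. p i ob \<ge> 0) \<and>
     (\<forall>i\<in>N. (\<Sum>ob\<in>Ob. p i ob) = 1) \<and>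
     (\<forall>ob\<in>Ob. (\<Sum>i\<in>N. p i ob) = 1)"

definition deterministic_matching :: "nat set \<Rightarrow> nat set \<Rightarrow> (nat \<Rightarrow> nat \<Rightarrow> real) \<Rightarrow> bool" where
  "deterministic_matching N Ob P \<longleftrightarrow>
     random_matching N Ob P \<and> (\<forall>i\<in>N. \<forall>ob\<in>Ob. P i ob \<in> {0, 1})"

definition decomposition :: "nat set \<Rightarrow> nat set \<Rightarrow> (nat \<Rightarrow> nat \<Rightarrow> real)
    \<Rightarrow> (real \<times> (nat \<Rightarrow> nat \<Rightarrow> real)) list \<Rightarrow> bool" where
  "decomposition N Ob p D \<longleftrightarrow>
     D \<noteq> [] \<and>
     (\<forall>(l, P) \<in> set D. 0 < l \<and> l \<le> 1 \<and> deterministic_matching N Ob P) \<and>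
     sum_list (map fst D) = 1 \<and>
     (\<forall>i\<in>N. \<forall>ob\<in>Ob. p i ob = sum_list (map (\<lambda>(l, P). l * P i ob) D))"

definition stable_det :: "nat set \<Rightarrow> nat set \<Rightarrow> (nat \<Rightarrow> nat rel) \<Rightarrow> (nat \<Rightarrow> nat rel)
    \<Rightarrow> (nat \<Rightarrow> nat \<Rightarrow> real) \<Rightarrow> bool" where
  "stable_det N Ob pref prio P \<longleftrightarrow>
     \<not> (\<exists>i\<in>N. \<exists>j\<in>N. \<exists>ob\<in>Ob. \<exists>ob'\<in>Ob.
          P i ob' = 1 \<and> P j ob = 1 \<and> (ob, ob') \<in> pref i \<and> (i, j) \<in> prio ob)"

definition ex_ante_stable :: "nat set \<Rightarrow> nat set \<Rightarrow> (nat \<Rightarrow> nat rel) \<Rightarrow> (nat \<Rightarrow> nat rel)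
    \<Rightarrow> (nat \<Rightarrow> nat \<Rightarrow> real) \<Rightarrow> bool" where
  "ex_ante_stable N Ob pref prio p \<longleftrightarrow>
     \<not> (\<exists>i\<in>N. \<exists>j\<in>N. \<exists>ob\<in>Ob. \<exists>ob'\<in>Ob.
          p i ob' > 0 \<and> p j ob > 0 \<and> (ob, ob') \<in> pref i \<and> (i, j) \<in> prio ob)"

definition robust_ex_post_stable :: "nat set \<Rightarrow> nat set \<Rightarrow> (nat \<Rightarrow> nat rel) \<Rightarrow> (nat \<Rightarrow> nat rel)
    \<Rightarrow> (nat \<Rightarrow> nat \<Rightarrow> real) \<Rightarrow> bool" where
  "robust_ex_post_stable N Ob pref prio p \<longleftrightarrow>
     (\<forall>D. decomposition N Ob p D \<longrightarrow> (\<forall>(l, P) \<in> set D. stable_det N Ob pref prio P))"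

end

theory Submission
  imports Defs
begin

lemma sum_list_ge_mem:
  fixes f :: "'a \<Rightarrow> real"
  assumes "x \<in> set xs" "\<forall>y\<in>set xs. 0 \<le> f y"
  shows "f x \<le> sum_list (map f xs)"
  using assms
proof (induction xs)
  case Nil then show ?case by simp
next
  case (Cons a xs)
  show ?case
  proof (cases "x = a")
    case True
    have "0 \<le> sum_list (map f xs)"
      using Cons.prems(2) by (induction xs) auto
    then show ?thesis using True by simp
  next
    case False
    then have "f x \<le> sum_list (map f xs)" using Cons by auto
    moreover have "0 \<le> f a" using Cons.prems(2) by simp
    ultimately show ?thesis by simp
  qed
qed

definition pE :: "nat \<Rightarrow> nat \<Rightarrow> real" where
  "pE i ob = (if (i, ob) \<in> {(1,1),(1,2),(2,2),(2,3),(3,3),(3,1)} then 1/2 else 0)"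

definition prefE :: "nat \<Rightarrow> nat rel" where
  "prefE i = (if i = 1 then {(1,3),(1,2),(3,2)} else if i = 2 then {(2,3),(2,1),(3,1)}
     else {(3,1),(3,2),(1,2)})"

definition prioE :: "nat \<Rightarrow> nat rel" where
  "prioE ob = (if ob = 1 then {(3,1),(3,2),(1,2)} else if ob = 2 then {(1,2),(1,3),(2,3)}
     else {(2,1),(2,3),(1,3)})"

lemma support:
  assumes "decomposition {1,2,3} {1,2,3} pE D" "(l, P) \<in> set D"
    "i \<in> {1,2,3}" "ob \<in> {1,2,3}" "P i ob = 1"
  shows "pE i ob > 0"
proof -
  have D: "\<forall>(l, P) \<in> set D. 0 < l \<and> l \<le> 1 \<and> deterministic_matching {1,2,3} {1,2,3} P"
    and eq: "pE i ob = sum_list (map (\<lambda>(l, P). l * P i ob) D)"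
    using assms unfolding decomposition_def by auto
  have nn: "\<forall>y\<in>set D. 0 \<le> (\<lambda>(l, P). l * P i ob) y"
  proof
    fix y assume y: "y \<in> set D"
    obtain l' P' where yy: "y = (l', P')" by force
    have "0 < l'" "deterministic_matching {1,2,3} {1,2,3} P'" using D y yy by auto
    then have "P' i ob \<ge> 0" using assms(3,4) unfolding deterministic_matching_def random_matching_def by auto
    then show "0 \<le> (\<lambda>(l, P). l * P i ob) y" using \<open>0 < l'\<close> yy by simp
  qed
  have "(\<lambda>(l, P). l * P i ob) (l, P) \<le> pE i ob"
    using sum_list_ge_mem[OF assms(2) nn] eq by simp
  moreover have "0 < l" using D assms(2) by auto
  ultimately show ?thesis using assms(5) by simp
qed

lemma stable_part:
  assumes "decomposition {1,2,3} {1,2,3} pE D" "(l, P) \<in> set D"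
  shows "stable_det {1,2,3} {1,2,3} prefE prioE P"
proof -
  have dm: "deterministic_matching {1,2,3} {1,2,3} P"
    using assms unfolding decomposition_def by auto
  have z: "P i ob = 0" if "i \<in> {1,2,3}" "ob \<in> {1,2,3}" "pE i ob = 0" for i ob
  proof -
    have "P i ob \<in> {0,1}" using dm that unfolding deterministic_matching_def by auto
    moreover have "P i ob \<noteq> 1" using support[OF assms that(1,2)] that(3) by auto
    ultimately show ?thesis by auto
  qed
  have v: "P i ob \<in> {0,1}" if "i \<in> {1,2,3}" "ob \<in> {1,2,3}" for i ob
    using dm that unfolding deterministic_matching_def by auto
  have rs: "(\<Sum>ob\<in>{1,2,3}. P i ob) = 1" if "i \<in> {1,2,3}" for i
    using dm that unfolding deterministic_matching_def random_matching_def by auto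
  have cs: "(\<Sum>i\<in>{1,2,3}. P i ob) = 1" if "ob \<in> {1,2,3}" for ob
    using dm that unfolding deterministic_matching_def random_matching_def by auto
  have zs: "P 1 3 = 0" "P 2 1 = 0" "P 3 2 = 0"
    using z by (auto simp: pE_def)
  have r: "P 1 1 + P 1 2 = 1" "P 2 2 + P 2 3 = 1" "P 3 3 + P 3 1 = 1"
    using rs[of 1] rs[of 2] rs[of 3] zs by auto
  have c: "P 1 1 + P 3 1 = 1" "P 1 2 + P 2 2 = 1" "P 2 3 + P 3 3 = 1"
    using cs[of 1] cs[of 2] cs[of 3] zs by auto
  have vv: "P 1 1 \<in> {0,1}" using v by auto
  have cases: "(P 1 1 = 1 \<and> P 2 2 = 1 \<and> P 3 3 = 1 \<and> P 1 2 = 0 \<and> P 2 3 = 0 \<and> P 3 1 = 0) \<or>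
       (P 1 1 = 0 \<and> P 2 2 = 0 \<and> P 3 3 = 0 \<and> P 1 2 = 1 \<and> P 2 3 = 1 \<and> P 3 1 = 1)"
    using vv r c by auto
  then show ?thesis
    unfolding stable_det_def using zs
    by (auto simp: prefE_def prioE_def)
qed

theorem proposition4:
  shows "\<exists>(N::nat set) (Ob::nat set) (pref::nat \<Rightarrow> nat rel) (prio::nat \<Rightarrow> nat rel)
           (p::nat \<Rightarrow> nat \<Rightarrow> real).
           finite N \<and> finite Ob \<and> card N = card Ob \<and>
           (\<forall>i\<in>N. strict_pref_on Ob (pref i)) \<and>
           (\<forall>ob\<in>Ob. strict_pref_on N (prio ob)) \<and>
           random_matching N Ob p \<and>
           robust_ex_post_stable N Ob pref prio p \<and>
           \<not> ex_ante_stable N Ob pref prio p"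
proof (intro exI conjI)
  show "finite {1,2,3::nat}" by simp
  show "finite {1,2,3::nat}" by simp
  show "card {1,2,3::nat} = card {1,2,3::nat}" by simp
  show "\<forall>i\<in>{1,2,3}. strict_pref_on {1,2,3} (prefE i)"
    by (auto simp: strict_pref_on_def strict_linear_order_on_def prefE_def trans_def irrefl_def total_on_def)
  show "\<forall>ob\<in>{1,2,3}. strict_pref_on {1,2,3} (prioE ob)"
    by (auto simp: strict_pref_on_def strict_linear_order_on_def prioE_def trans_def irrefl_def total_on_def)
  show "random_matching {1,2,3} {1,2,3} pE"
    by (auto simp: random_matching_def pE_def)
  show "robust_ex_post_stable {1,2,3} {1,2,3} prefE prioE pE"
    unfolding robust_ex_post_stable_def using stable_part by blast
  show "\<not> ex_ante_stable {1,2,3} {1,2,3} prefE prioE pE"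
  proof
    assume "ex_ante_stable {1,2,3} {1,2,3} prefE prioE pE"
    moreover have "pE 1 2 > 0 \<and> pE 3 3 > 0 \<and> (3, 2) \<in> prefE 1 \<and> (1, 3) \<in> prioE 3"
      by (simp add: pE_def prefE_def prioE_def)
    ultimately show False unfolding ex_ante_stable_def by blast
  qed
qed

end
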